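(* Let $L$ be a finite-dimensional simple Lie algebra, and let $L = L_a \oplus L_b$ be a decomposition of the vector space $L$ into a direct sum of two nonzero subspaces $L_a, L_b$ which is a grading, i.e. for every pair $j,k \in \{a,b\}$ there exists $l \in \{a,b\}$ with $[L_j, L_k] \subseteq L_l$. Then this grading is a $\mathbb{Z}_2$-grading: the labels $a,b$ can be identified with the two elements $0,1$ of the group $\mathbb{Z}_2$ (by a bijection $\{a,b\}\to\mathbb{Z}_2$) in such a way that $[L_i, L_j] \subseteq L_{i+j}$ for all $i,j \in \mathbb{Z}_2$.
   Context: A grading of a Lie algebra $L$ is a decomposition of $L$ as a direct sum of vector subspaces $L_j$, $j\in\mathcal J$, such that for any $j,k\in\mathcal J$ there is $l\in\mathcal J$ with $[L_j,L_k]\subseteq L_l$. A $G$-grading for an abelian group $G$ (written additively) is a decomposition $L=\bigoplus_{i\in G}L_i$ with $[L_i,L_j]\subseteq L_{i+j}$ for all $i,j\in G$. *)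

theory Defs
  imports Main "HOL.Vector_Spaces" "HOL-Library.Z2"
begin

definition lie_algebra :: "('k::field \<Rightarrow> 'v::ab_group_add \<Rightarrow> 'v) \<Rightarrow> ('v \<Rightarrow> 'v \<Rightarrow> 'v) \<Rightarrow> bool" where
  "lie_algebra sc br \<longleftrightarrow>
     vector_space sc \<and>
     (\<forall>x y z. br (x + y) z = br x z + br y z) \<and>
     (\<forall>x y z. br x (y + z) = br x y + br x z) \<and>
     (\<forall>c x y. br (sc c x) y = sc c (br x y)) \<and>
     (\<forall>c x y. br x (sc c y) = sc c (br x y)) \<and>
     (\<forall>x. br x x = 0) \<and>
     (\<forall>x y z. br x (br y z) + br y (br z x) + br z (br x y) = 0)"

definition finite_dim :: "('k::field \<Rightarrow> 'v::ab_group_add \<Rightarrow> 'v) \<Rightarrow> bool" where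
  "finite_dim sc \<longleftrightarrow> (\<exists>B. finite B \<and> module.span sc B = UNIV)"

definition lie_ideal :: "('k::field \<Rightarrow> 'v::ab_group_add \<Rightarrow> 'v) \<Rightarrow> ('v \<Rightarrow> 'v \<Rightarrow> 'v) \<Rightarrow> 'v set \<Rightarrow> bool" where
  "lie_ideal sc br I \<longleftrightarrow> module.subspace sc I \<and> (\<forall>x y. y \<in> I \<longrightarrow> br x y \<in> I)"

definition simple_lie_algebra :: "('k::field \<Rightarrow> 'v::ab_group_add \<Rightarrow> 'v) \<Rightarrow> ('v \<Rightarrow> 'v \<Rightarrow> 'v) \<Rightarrow> bool" where
  "simple_lie_algebra sc br \<longleftrightarrow> lie_algebra sc br \<and> (\<exists>x y. br x y \<noteq> 0) \<and>
     (\<forall>I. lie_ideal sc br I \<longrightarrow> I = {0} \<or> I = UNIV)"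

text \<open>[A,B] \<subseteq> C, i.e. all brackets of elements of A with elements of B lie in C
(C a subspace, so this is the same as the span of the brackets lying in C).\<close>
definition br_sub :: "('v \<Rightarrow> 'v \<Rightarrow> 'v) \<Rightarrow> 'v set \<Rightarrow> 'v set \<Rightarrow> 'v set \<Rightarrow> bool" where
  "br_sub br A B C \<longleftrightarrow> (\<forall>x\<in>A. \<forall>y\<in>B. br x y \<in> C)"

end

theory Submission
  imports Defs
begin

lemma lie_basic:
  assumes "lie_algebra sc br"
  shows "br x y = - br y x" "br 0 y = 0" "br x 0 = 0"
    "br (x+y) z = br x z + br y z" "br x (y+z) = br x y + br x z"
    "br x (sc c y) = sc c (br x y)"
    "br x (br y z) + br y (br z x) + br z (br x y) = 0"
proof -
  have a: "\<forall>x y z. br (x + y) z = br x z + br y z" "\<forall>x y z. br x (y + z) = br x y + br x z"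
    "\<forall>x. br x x = 0" using assms unfolding lie_algebra_def by auto
  have "br (x+y) (x+y) = 0" using a(3) by blast
  moreover have "br (x+y) (x+y) = br x x + br y x + (br x y + br y y)"
    using a(1) a(2) by (metis add.assoc add.commute)
  ultimately have "br x x + br y x + br x y + br y y = 0" by (simp add: add.assoc)
  moreover have "br x x = 0" "br y y = 0" using a by auto
  ultimately have "br y x + br x y = 0" by simp
  thus "br x y = - br y x" by (metis neg_eq_iff_add_eq_0)
  show "br 0 y = 0" using a(1) by (metis add_0 add_cancel_right_left)
  show "br x 0 = 0" using a(2) by (metis add_0 add_cancel_right_left)
  show "br (x+y) z = br x z + br y z" "br x (y+z) = br x y + br x z" using a by auto
  show "br x (sc c y) = sc c (br x y)"
    "br x (br y z) + br y (br z x) + br z (br x y) = 0"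
    using assms unfolding lie_algebra_def by auto
qed

lemma no_ideal:
  assumes lie: "simple_lie_algebra sc br"
    and sX: "module.subspace sc X" and sY: "module.subspace sc Y"
    and X0: "X \<noteq> {0}" and Y0: "Y \<noteq> {0}" and XY: "X \<inter> Y = {0}"
    and dec: "\<And>v. \<exists>a b. a \<in> X \<and> b \<in> Y \<and> v = a + b"
    and h1: "br_sub br X X X" and h2: "br_sub br X Y X"
  shows False
proof -
  have la: "lie_algebra sc br" using lie unfolding simple_lie_algebra_def by auto
  interpret vector_space sc using la unfolding lie_algebra_def by auto
  have "lie_ideal sc br X"
    unfolding lie_ideal_def
  proof (intro conjI sX allI impI)
    fix x a assume a: "a \<in> X"
    obtain a' b' where ab: "a' \<in> X" "b' \<in> Y" "x = a' + b'" using dec by blast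
    have "br a' a \<in> X" using h1 ab a unfolding br_sub_def by auto
    moreover have "br b' a \<in> X" using h2 ab a lie_basic(1)[OF la, of b' a]
      subspace_neg[OF sX] unfolding br_sub_def by auto
    ultimately show "br x a \<in> X" using ab lie_basic(4)[OF la] subspace_add[OF sX] by auto
  qed
  hence "X = UNIV" using X0 lie unfolding simple_lie_algebra_def by auto
  hence "Y \<subseteq> {0}" using XY by auto
  thus False using Y0 subspace_0[OF sY] by auto
qed

lemma key:
  assumes lie: "simple_lie_algebra sc br"
    and sX: "module.subspace sc X" and sY: "module.subspace sc Y"
    and X0: "X \<noteq> {0}" and XY: "X \<inter> Y = {0}"
    and dec: "\<And>v. \<exists>a b. a \<in> X \<and> b \<in> Y \<and> v = a + b"
    and h1: "br_sub br X X Y" and h2: "br_sub br Y Y X" and h3: "br_sub br X Y X"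
  shows "\<forall>y1\<in>Y. \<forall>y2\<in>Y. br y1 y2 = 0"
proof -
  have la: "lie_algebra sc br" using lie unfolding simple_lie_algebra_def by auto
  interpret vector_space sc using la unfolding lie_algebra_def by auto
  note lb = lie_basic[OF la]
  have step1: "br b (br a1 a2) = 0" if "b \<in> Y" "a1 \<in> X" "a2 \<in> X" for b a1 a2
  proof -
    have e: "br b (br a1 a2) = - (br a1 (br a2 b) + br a2 (br b a1))"
      using lb(7)[of b a1 a2] by (subst eq_neg_iff_add_eq_0) (simp add: add.assoc)
    have "br a2 b \<in> X" using h3 that unfolding br_sub_def by auto
    hence u: "br a1 (br a2 b) \<in> Y" using h1 that unfolding br_sub_def by auto
    have "br a1 b \<in> X" using h3 that unfolding br_sub_def by auto
    hence "br b a1 \<in> X" using lb(1)[of b a1] subspace_neg[OF sX] by auto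
    hence "br a2 (br b a1) \<in> Y" using h1 that unfolding br_sub_def by auto
    hence "br b (br a1 a2) \<in> Y" using e u subspace_diff[OF sY] subspace_neg[OF sY] by auto
    moreover have "br a1 a2 \<in> Y" using h1 that unfolding br_sub_def by auto
    hence "br b (br a1 a2) \<in> X" using h2 that unfolding br_sub_def by auto
    ultimately show ?thesis using XY by auto
  qed
  define Z where "Z = {z\<in>Y. \<forall>b\<in>Y. br b z = 0}"
  define I where "I = {a + z | a z. a \<in> X \<and> z \<in> Z}"
  have XI: "X \<subseteq> I" unfolding I_def Z_def
    using subspace_0[OF sY] lb(3) by force
  have "lie_ideal sc br I"
    unfolding lie_ideal_def
  proof (intro conjI allI impI)
    show "subspace I" unfolding subspace_def
    proof (intro conjI ballI allI)
      show "0 \<in> I" using XI subspace_0[OF sX] by auto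
    next
      fix x y assume "x \<in> I" "y \<in> I"
      then obtain a z a' z' where "a \<in> X" "z \<in> Z" "x = a + z" "a' \<in> X" "z' \<in> Z" "y = a' + z'"
        unfolding I_def by auto
      moreover have "z + z' \<in> Z" using calculation lb(5) subspace_add[OF sY] unfolding Z_def by auto
      moreover have "a + a' \<in> X" using calculation subspace_add[OF sX] by auto
      moreover have "x + y = (a + a') + (z + z')" using calculation by (simp add: algebra_simps)
      ultimately show "x + y \<in> I" unfolding I_def by blast
    next
      fix c x assume "x \<in> I"
      then obtain a z where az: "a \<in> X" "z \<in> Z" "x = a + z" unfolding I_def by auto
      have "sc c z \<in> Z" using az lb(6) subspace_scale[OF sY] unfolding Z_def by auto
      moreover have "sc c a \<in> X" using az subspace_scale[OF sX] by auto
      moreover have "sc c x = sc c a + sc c z" using az scale_right_distrib by auto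
      ultimately show "sc c x \<in> I" unfolding I_def by blast
    qed
  next
    fix x y assume "y \<in> I"
    then obtain a z where az: "a \<in> X" "z \<in> Z" "y = a + z" unfolding I_def by auto
    obtain a' b' where ab: "a' \<in> X" "b' \<in> Y" "x = a' + b'" using dec by blast
    have zY: "z \<in> Y" using az unfolding Z_def by auto
    have e: "br x y = (br a' z + br b' a) + br a' a + br b' z"
      using ab az lb(4,5) by (simp add: algebra_simps)
    have "br b' z = 0" using az ab unfolding Z_def by auto
    moreover have "br a' a \<in> Z" using h1 ab az step1 unfolding Z_def br_sub_def by auto
    moreover have "br a' z \<in> X" using h3 ab zY unfolding br_sub_def by auto
    moreover have "br a b' \<in> X" using h3 ab az unfolding br_sub_def by auto
    hence "br b' a \<in> X" using lb(1)[of b' a] subspace_neg[OF sX] by auto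
    ultimately have "br x y = (br a' z + br b' a) + br a' a" "br a' z + br b' a \<in> X"
      using e subspace_add[OF sX] by auto
    thus "br x y \<in> I" using \<open>br a' a \<in> Z\<close> unfolding I_def by blast
  qed
  moreover have "I \<noteq> {0}" using XI X0 subspace_0[OF sX] by auto
  ultimately have "I = UNIV" using lie unfolding simple_lie_algebra_def by auto
  have YZ: "y \<in> Z" if "y \<in> Y" for y
  proof -
    obtain a z where az: "a \<in> X" "z \<in> Z" "y = a + z" using \<open>I = UNIV\<close> unfolding I_def by blast
    have "z \<in> Y" using az unfolding Z_def by auto
    hence "a \<in> Y" using az that subspace_diff[OF sY, of y z] by (simp add: algebra_simps)
    hence "a = 0" using az XY by auto
    thus ?thesis using az by simp
  qed
  show ?thesis using YZ unfolding Z_def by auto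
qed

lemma zero_sub: "\<forall>y1\<in>Y. \<forall>y2\<in>Y. br y1 y2 = 0 \<Longrightarrow> 0 \<in> C \<Longrightarrow> br_sub br Y Y C"
  unfolding br_sub_def by auto

lemma sym_sub:
  assumes "lie_algebra sc br" "module.subspace sc C" "br_sub br X Y C"
  shows "br_sub br Y X C"
proof -
  interpret vector_space sc using assms(1) unfolding lie_algebra_def by auto
  show ?thesis using assms lie_basic(1)[OF assms(1)] subspace_neg[OF assms(2)]
    unfolding br_sub_def by metis
qed

theorem theorem1:
  fixes sc :: "'k::field \<Rightarrow> 'v::ab_group_add \<Rightarrow> 'v"
    and br :: "'v \<Rightarrow> 'v \<Rightarrow> 'v"
    and L :: "bool \<Rightarrow> 'v set"
  assumes "simple_lie_algebra sc br"
    and "finite_dim sc"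
    and "\<And>j. module.subspace sc (L j)"
    and "\<And>j. L j \<noteq> {0}"
    and "L True \<inter> L False = {0}"
    and "\<And>v. \<exists>a b. a \<in> L True \<and> b \<in> L False \<and> v = a + b"
    and "\<And>j k. \<exists>l. br_sub br (L j) (L k) (L l)"
  shows "\<exists>\<sigma> :: bit \<Rightarrow> bool. bij \<sigma> \<and>
           (\<forall>i j. br_sub br (L (\<sigma> i)) (L (\<sigma> j)) (L (\<sigma> (i + j))))"
proof -
  have la: "lie_algebra sc br" using assms(1) unfolding simple_lie_algebra_def by auto
  interpret vector_space sc using la unfolding lie_algebra_def by auto
  have dec2: "\<And>v. \<exists>a b. a \<in> L False \<and> b \<in> L True \<and> v = a + b"
    using assms(6) by (metis add.commute)
  have XY2: "L False \<inter> L True = {0}" using assms(5) by auto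
  obtain l1 where l1: "br_sub br (L True) (L True) (L l1)" using assms(7) by blast
  obtain l2 where l2: "br_sub br (L False) (L False) (L l2)" using assms(7) by blast
  obtain l3 where l3: "br_sub br (L True) (L False) (L l3)" using assms(7) by blast
  have l3': "br_sub br (L False) (L True) (L l3)" using sym_sub[OF la assms(3) l3] .
  have z: "0 \<in> L j" for j using subspace_0[OF assms(3)] .
  have good1: ?thesis if "br_sub br (L True) (L True) (L True)" "br_sub br (L False) (L False) (L True)"
    "br_sub br (L True) (L False) (L False)"
  proof (intro exI[of _ "\<lambda>i. i = 0"] conjI allI)
    show "bij (\<lambda>i::bit. i = 0)" unfolding bij_def inj_def surj_def
      by (metis bit_not_zero_iff)
    have s: "br_sub br (L False) (L True) (L False)" using sym_sub[OF la assms(3) that(3)] .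
    fix i j :: bit
    show "br_sub br (L (i = 0)) (L (j = 0)) (L (i + j = 0))"
      using that s by (cases "i = 0"; cases "j = 0") auto
  qed
  have good2: ?thesis if "br_sub br (L True) (L True) (L False)" "br_sub br (L False) (L False) (L False)"
    "br_sub br (L True) (L False) (L True)"
  proof (intro exI[of _ "\<lambda>i. i = 1"] conjI allI)
    show "bij (\<lambda>i::bit. i = 1)" unfolding bij_def inj_def surj_def
      by (metis bit_not_one_iff)
    have s: "br_sub br (L False) (L True) (L True)" using sym_sub[OF la assms(3) that(3)] .
    fix i j :: bit
    show "br_sub br (L (i = 1)) (L (j = 1)) (L (i + j = 1))"
      using that s by (cases "i = 0"; cases "j = 0") auto
  qed
  have c1: "l1 \<Longrightarrow> l3 \<Longrightarrow> False"
    using no_ideal[OF assms(1) assms(3) assms(3) assms(4) assms(4) assms(5) assms(6)] l1 l3 by auto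
  have c2: "\<not>l2 \<Longrightarrow> \<not>l3 \<Longrightarrow> False"
    using no_ideal[OF assms(1) assms(3) assms(3) assms(4) assms(4) XY2 dec2] l2 l3' by auto
  have c3: "l1 \<Longrightarrow> l2 \<Longrightarrow> \<not>l3 \<Longrightarrow> ?thesis" using good1 l1 l2 l3 by auto
  have c4: "\<not>l1 \<Longrightarrow> \<not>l2 \<Longrightarrow> l3 \<Longrightarrow> ?thesis" using good2 l1 l2 l3 by auto
  have c5: ?thesis if a: "\<not>l1" "l2" "l3"
  proof -
    have "\<forall>y1\<in>L False. \<forall>y2\<in>L False. br y1 y2 = 0"
      using key[OF assms(1) assms(3) assms(3) assms(4) assms(5) assms(6)] a l1 l2 l3 by auto
    thus ?thesis using good2 zero_sub[OF _ z] a l1 l3 by auto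
  qed
  have c6: ?thesis if a: "\<not>l1" "l2" "\<not>l3"
  proof -
    have "\<forall>y1\<in>L True. \<forall>y2\<in>L True. br y1 y2 = 0"
      using key[OF assms(1) assms(3) assms(3) assms(4) XY2 dec2] a l1 l2 l3' by auto
    thus ?thesis using good1 zero_sub[OF _ z] a l2 l3 by auto
  qed
  show ?thesis using c1 c2 c3 c4 c5 c6 by (cases l1; cases l2; cases l3) auto
qed

end
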